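(* Let $R$ be a commutative noetherian ring. The class $\mathcal{Z}$ of $R$-modules is a Serre subcategory of the category of $R$-modules: it is closed under submodules, quotient modules and extensions (i.e. if $0\to M'\to M\to M''\to 0$ is exact with $M',M''\in\mathcal{Z}$ then $M\in\mathcal{Z}$).
   Context: An $R$-module $M$ belongs to the class $\mathcal{Z}$ if for every descending chain $N_1\supseteq N_2\supseteq N_3\supseteq\cdots$ of submodules of $M$ there is $n$ such that $\operatorname{Supp}_R(N_i/N_{i+1})\subseteq\operatorname{Max}R$ for all $i\ge n$. ($\operatorname{Max}R$ is the set of maximal ideals of $R$.) *)

theory Defs
  imports "HOL-Algebra.Algebra"
begin

definition MaxSpec :: "('r, 'x) ring_scheme \<Rightarrow> 'r set set" where
  "MaxSpec R = {m. maximalideal m R}"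

text \<open>Support of the subquotient module A/B (B \<subseteq> A submodules of M):
  the prime ideals p with (A/B)_p \<noteq> 0.  Unfolded: (A/B)_p \<noteq> 0 iff some class
  x + B (x \<in> A) has nonzero image x/1 in the localization, i.e. no s \<notin> p
  satisfies s x \<in> B.\<close>
definition Supp_quot ::
  "('r, 'x) ring_scheme \<Rightarrow> ('r, 'a) module \<Rightarrow> 'a set \<Rightarrow> 'a set \<Rightarrow> 'r set set" where
  "Supp_quot R M A B =
     {p. primeideal p R \<and> (\<exists>x\<in>A. \<forall>s\<in>carrier R - p. s \<odot>\<^bsub>M\<^esub> x \<notin> B)}"

definition in_Z :: "('r, 'x) ring_scheme \<Rightarrow> ('r, 'a) module \<Rightarrow> bool" where
  "in_Z R M \<longleftrightarrow>
     (\<forall>N :: nat \<Rightarrow> 'a set.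
        (\<forall>i. submodule (N i) R M) \<and> (\<forall>i. N (Suc i) \<subseteq> N i) \<longrightarrow>
        (\<exists>n. \<forall>i\<ge>n. Supp_quot R M (N i) (N (Suc i)) \<subseteq> MaxSpec R))"

definition module_hom ::
  "('r, 'x) ring_scheme \<Rightarrow> ('r, 'a) module \<Rightarrow> ('r, 'b) module \<Rightarrow> ('a \<Rightarrow> 'b) set" where
  "module_hom R M N =
     {f. f \<in> carrier M \<rightarrow> carrier N \<and>
         (\<forall>x\<in>carrier M. \<forall>y\<in>carrier M. f (x \<oplus>\<^bsub>M\<^esub> y) = f x \<oplus>\<^bsub>N\<^esub> f y) \<and>
         (\<forall>a\<in>carrier R. \<forall>x\<in>carrier M. f (a \<odot>\<^bsub>M\<^esub> x) = a \<odot>\<^bsub>N\<^esub> f x)}"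

end

theory Submission
  imports Defs
begin

lemma sub_facts:
  assumes "module R M" "submodule H R M"
  shows "H \<subseteq> carrier M" "\<zero>\<^bsub>M\<^esub> \<in> H"
    "\<And>a b. a \<in> H \<Longrightarrow> b \<in> H \<Longrightarrow> a \<oplus>\<^bsub>M\<^esub> b \<in> H"
    "\<And>a x. a \<in> carrier R \<Longrightarrow> x \<in> H \<Longrightarrow> a \<odot>\<^bsub>M\<^esub> x \<in> H"
    "\<And>a. a \<in> H \<Longrightarrow> \<ominus>\<^bsub>M\<^esub> a \<in> H"
proof -
  interpret module R M by fact
  show "H \<subseteq> carrier M" using submoduleE(1)[OF assms(2)] .
  show "\<And>a b. a \<in> H \<Longrightarrow> b \<in> H \<Longrightarrow> a \<oplus>\<^bsub>M\<^esub> b \<in> H" using submoduleE(5)[OF assms(2)] by blast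
  show sm: "\<And>a x. a \<in> carrier R \<Longrightarrow> x \<in> H \<Longrightarrow> a \<odot>\<^bsub>M\<^esub> x \<in> H" using submoduleE(4)[OF assms(2)] by blast
  show "\<And>a. a \<in> H \<Longrightarrow> \<ominus>\<^bsub>M\<^esub> a \<in> H" using submoduleE(3)[OF assms(2)] by blast
  obtain a where "a \<in> H" using submoduleE(2)[OF assms(2)] by blast
  then have "\<zero>\<^bsub>R\<^esub> \<odot>\<^bsub>M\<^esub> a \<in> H" using sm by simp
  moreover have "\<zero>\<^bsub>R\<^esub> \<odot>\<^bsub>M\<^esub> a = \<zero>\<^bsub>M\<^esub>" using \<open>a \<in> H\<close> submoduleE(1)[OF assms(2)] by auto
  ultimately show "\<zero>\<^bsub>M\<^esub> \<in> H" by simp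
qed

lemma sub_intro:
  assumes "module R M" "H \<subseteq> carrier M" "\<zero>\<^bsub>M\<^esub> \<in> H"
    "\<And>a b. a \<in> H \<Longrightarrow> b \<in> H \<Longrightarrow> a \<oplus>\<^bsub>M\<^esub> b \<in> H"
    "\<And>a x. a \<in> carrier R \<Longrightarrow> x \<in> H \<Longrightarrow> a \<odot>\<^bsub>M\<^esub> x \<in> H"
  shows "submodule H R M"
proof -
  interpret module R M by fact
  show ?thesis
  proof (rule submoduleI)
    fix a assume a: "a \<in> H"
    then have "a \<in> carrier M" using assms(2) by blast
    have "(\<ominus>\<^bsub>R\<^esub> \<one>\<^bsub>R\<^esub>) \<odot>\<^bsub>M\<^esub> a = \<ominus>\<^bsub>M\<^esub> (\<one>\<^bsub>R\<^esub> \<odot>\<^bsub>M\<^esub> a)"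
      using smult_l_minus \<open>a \<in> carrier M\<close> by simp
    also have "\<dots> = \<ominus>\<^bsub>M\<^esub> a" using \<open>a \<in> carrier M\<close> by simp
    finally show "\<ominus>\<^bsub>M\<^esub> a \<in> H" using assms(5)[OF _ a, of "\<ominus>\<^bsub>R\<^esub> \<one>\<^bsub>R\<^esub>"] by simp
  qed (use assms in auto)
qed

lemma hom_facts:
  assumes "module R M" "module R N" "f \<in> module_hom R M N"
  shows "f \<zero>\<^bsub>M\<^esub> = \<zero>\<^bsub>N\<^esub>"
    "\<And>x. x \<in> carrier M \<Longrightarrow> f (\<ominus>\<^bsub>M\<^esub> x) = \<ominus>\<^bsub>N\<^esub> f x"
    "\<And>x. x \<in> carrier M \<Longrightarrow> f x \<in> carrier N"
    "\<And>x y. x \<in> carrier M \<Longrightarrow> y \<in> carrier M \<Longrightarrow> f (x \<oplus>\<^bsub>M\<^esub> y) = f x \<oplus>\<^bsub>N\<^esub> f y"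
    "\<And>a x. a \<in> carrier R \<Longrightarrow> x \<in> carrier M \<Longrightarrow> f (a \<odot>\<^bsub>M\<^esub> x) = a \<odot>\<^bsub>N\<^esub> f x"
proof -
  interpret A: module R M by fact
  interpret B: module R N by fact
  show cl: "\<And>x. x \<in> carrier M \<Longrightarrow> f x \<in> carrier N" using assms(3) unfolding module_hom_def by auto
  show "\<And>x y. x \<in> carrier M \<Longrightarrow> y \<in> carrier M \<Longrightarrow> f (x \<oplus>\<^bsub>M\<^esub> y) = f x \<oplus>\<^bsub>N\<^esub> f y"
    using assms(3) unfolding module_hom_def by auto
  show sm: "\<And>a x. a \<in> carrier R \<Longrightarrow> x \<in> carrier M \<Longrightarrow> f (a \<odot>\<^bsub>M\<^esub> x) = a \<odot>\<^bsub>N\<^esub> f x"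
    using assms(3) unfolding module_hom_def by auto
  have "f (\<zero>\<^bsub>R\<^esub> \<odot>\<^bsub>M\<^esub> \<zero>\<^bsub>M\<^esub>) = \<zero>\<^bsub>R\<^esub> \<odot>\<^bsub>N\<^esub> f \<zero>\<^bsub>M\<^esub>" by (rule sm) auto
  then show "f \<zero>\<^bsub>M\<^esub> = \<zero>\<^bsub>N\<^esub>" using cl[of "\<zero>\<^bsub>M\<^esub>"] by simp
  fix x assume x: "x \<in> carrier M"
  have "f ((\<ominus>\<^bsub>R\<^esub> \<one>\<^bsub>R\<^esub>) \<odot>\<^bsub>M\<^esub> x) = (\<ominus>\<^bsub>R\<^esub> \<one>\<^bsub>R\<^esub>) \<odot>\<^bsub>N\<^esub> f x" by (rule sm) (use x in auto)
  then show "f (\<ominus>\<^bsub>M\<^esub> x) = \<ominus>\<^bsub>N\<^esub> f x"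
    using x cl[OF x] A.smult_l_minus[of "\<one>\<^bsub>R\<^esub>" x] B.smult_l_minus[of "\<one>\<^bsub>R\<^esub>" "f x"] by simp
qed



lemma part1:
  assumes M: "module R M" and N: "submodule N R M" and Z: "in_Z R M"
  shows "in_Z R (M\<lparr>carrier := N\<rparr>)"
  unfolding in_Z_def
proof (intro allI impI)
  fix K :: "nat \<Rightarrow> _" assume K: "(\<forall>i. submodule (K i) R (M\<lparr>carrier := N\<rparr>)) \<and> (\<forall>i. K (Suc i) \<subseteq> K i)"
  have M': "module R (M\<lparr>carrier := N\<rparr>)" using submodule.submodule_is_module[OF N M] .
  have NM: "N \<subseteq> carrier M" using sub_facts(1)[OF M N] .
  have "submodule (K i) R M" for i
  proof -
    note S = sub_facts[OF M' K[THEN conjunct1, rule_format, of i]]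
    show ?thesis
      apply (rule sub_intro[OF M])
      using S(1) NM apply simp
      using S(2) apply simp
      using S(3) apply simp
      using S(4) by simp
  qed
  with K Z obtain n where "\<forall>i\<ge>n. Supp_quot R M (K i) (K (Suc i)) \<subseteq> MaxSpec R"
    unfolding in_Z_def by blast
  moreover have "Supp_quot R (M\<lparr>carrier := N\<rparr>) A B = Supp_quot R M A B" for A B
    unfolding Supp_quot_def by simp
  ultimately show "\<exists>n. \<forall>i\<ge>n. Supp_quot R (M\<lparr>carrier := N\<rparr>) (K i) (K (Suc i)) \<subseteq> MaxSpec R"
    by auto
qed

lemma part2:
  assumes M: "module R M" and M'': "module R M''" and g: "g \<in> module_hom R M M''"
    and surj: "g ` carrier M = carrier M''" and Z: "in_Z R M"
  shows "in_Z R M''"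
  unfolding in_Z_def
proof (intro allI impI)
  fix K :: "nat \<Rightarrow> _" assume K: "(\<forall>i. submodule (K i) R M'') \<and> (\<forall>i. K (Suc i) \<subseteq> K i)"
  note G = hom_facts[OF M M'' g]
  define A where "A i = {x \<in> carrier M. g x \<in> K i}" for i
  have "submodule (A i) R M" for i
  proof -
    note S = sub_facts[OF M'' K[THEN conjunct1, rule_format, of i]]
    interpret module R M by fact
    show ?thesis
      apply (rule sub_intro[OF M])
      unfolding A_def
      apply blast
      using S(2) G(1) apply simp
      using S(3) G(4) apply simp
      using S(4) G(5) by simp
  qed
  moreover have "A (Suc i) \<subseteq> A i" for i using K unfolding A_def by auto
  ultimately obtain n where n: "\<forall>i\<ge>n. Supp_quot R M (A i) (A (Suc i)) \<subseteq> MaxSpec R"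
    using Z[unfolded in_Z_def, rule_format, of A] by blast
  have "Supp_quot R M'' (K i) (K (Suc i)) \<subseteq> Supp_quot R M (A i) (A (Suc i))" for i
  proof
    fix p assume "p \<in> Supp_quot R M'' (K i) (K (Suc i))"
    then have p: "primeideal p R" and "\<exists>y\<in>K i. \<forall>s\<in>carrier R - p. s \<odot>\<^bsub>M''\<^esub> y \<notin> K (Suc i)"
      unfolding Supp_quot_def by simp_all
    then obtain y where y: "y \<in> K i" and H: "\<forall>s\<in>carrier R - p. s \<odot>\<^bsub>M''\<^esub> y \<notin> K (Suc i)"
      by blast
    have "y \<in> carrier M''" using y sub_facts(1)[OF M'' K[THEN conjunct1, rule_format, of i]] by blast
    then have "y \<in> g ` carrier M" using surj by simp
    then obtain x where x: "x \<in> carrier M" "g x = y" by (rule imageE) simp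
    have "\<forall>s\<in>carrier R - p. s \<odot>\<^bsub>M\<^esub> x \<notin> A (Suc i)"
    proof (intro ballI notI)
      fix s assume s: "s \<in> carrier R - p" and "s \<odot>\<^bsub>M\<^esub> x \<in> A (Suc i)"
      then have "g (s \<odot>\<^bsub>M\<^esub> x) \<in> K (Suc i)" unfolding A_def by simp
      moreover have "g (s \<odot>\<^bsub>M\<^esub> x) = s \<odot>\<^bsub>M''\<^esub> y" using G(5)[of s x] x s by simp
      ultimately show False using H s by simp
    qed
    moreover have "x \<in> A i" using x y unfolding A_def by simp
    ultimately have "\<exists>x\<in>A i. \<forall>s\<in>carrier R - p. s \<odot>\<^bsub>M\<^esub> x \<notin> A (Suc i)" by blast
    then show "p \<in> Supp_quot R M (A i) (A (Suc i))" using p unfolding Supp_quot_def by simp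
  qed
  with n show "\<exists>n. \<forall>i\<ge>n. Supp_quot R M'' (K i) (K (Suc i)) \<subseteq> MaxSpec R" by blast
qed

lemma part3:
  assumes M': "module R M'" and M: "module R M" and M'': "module R M''"
    and f: "f \<in> module_hom R M' M" and g: "g \<in> module_hom R M M''"
    and surj: "g ` carrier M = carrier M''"
    and ex: "{x \<in> carrier M. g x = \<zero>\<^bsub>M''\<^esub>} = f ` carrier M'"
    and Z': "in_Z R M'" and Z'': "in_Z R M''"
  shows "in_Z R M"
  unfolding in_Z_def
proof (intro allI impI)
  fix K :: "nat \<Rightarrow> _" assume K: "(\<forall>i. submodule (K i) R M) \<and> (\<forall>i. K (Suc i) \<subseteq> K i)"
  have Ksub: "\<And>i. submodule (K i) R M" using K by blast
  have Kdec: "\<And>i. K (Suc i) \<subseteq> K i" using K by blast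
  note F = hom_facts[OF M' M f]
  note G = hom_facts[OF M M'' g]
  interpret MM: module R M by fact
  interpret MM'': module R M'' by fact
  define A where "A i = {x \<in> carrier M'. f x \<in> K i}" for i
  define B where "B i = g ` K i" for i
  have "submodule (A i) R M'" for i
  proof -
    note S = sub_facts[OF M Ksub[of i]]
    interpret MM': module R M' by fact
    show ?thesis
      apply (rule sub_intro[OF M'])
      unfolding A_def
      apply blast
      using S(2) F(1) apply simp
      using S(3) F(4) apply simp
      using S(4) F(5) by simp
  qed
  moreover have "A (Suc i) \<subseteq> A i" for i using Kdec unfolding A_def by blast
  ultimately obtain n1 where n1: "\<forall>i\<ge>n1. Supp_quot R M' (A i) (A (Suc i)) \<subseteq> MaxSpec R"
    using Z'[unfolded in_Z_def, rule_format, of A] by blast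
  have "submodule (B i) R M''" for i
  proof -
    note S = sub_facts[OF M Ksub[of i]]
    show ?thesis
    proof (rule sub_intro[OF M''])
      show "B i \<subseteq> carrier M''" unfolding B_def using S(1) G(3) by blast
      show "\<zero>\<^bsub>M''\<^esub> \<in> B i" unfolding B_def using S(2) G(1) by (metis imageI)
      fix a b assume "a \<in> B i" "b \<in> B i"
      then obtain u v where "u \<in> K i" "v \<in> K i" "a = g u" "b = g v" unfolding B_def by blast
      then show "a \<oplus>\<^bsub>M''\<^esub> b \<in> B i" unfolding B_def using S(1,3) G(4)[of u v]
        by (metis imageI subsetD)
    next
      fix a x assume "a \<in> carrier R" "x \<in> B i"
      then obtain u where "u \<in> K i" "x = g u" unfolding B_def by blast
      then show "a \<odot>\<^bsub>M''\<^esub> x \<in> B i" unfolding B_def using S(1,4) G(5)[of a u] \<open>a \<in> carrier R\<close>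
        by (metis imageI subsetD)
    qed
  qed
  moreover have "B (Suc i) \<subseteq> B i" for i using Kdec unfolding B_def by blast
  ultimately obtain n2 where n2: "\<forall>i\<ge>n2. Supp_quot R M'' (B i) (B (Suc i)) \<subseteq> MaxSpec R"
    using Z''[unfolded in_Z_def, rule_format, of B] by blast
  have "Supp_quot R M (K i) (K (Suc i)) \<subseteq> MaxSpec R" if i: "i \<ge> max n1 n2" for i
  proof
    fix p assume "p \<in> Supp_quot R M (K i) (K (Suc i))"
    then have p: "primeideal p R" and "\<exists>x\<in>K i. \<forall>s\<in>carrier R - p. s \<odot>\<^bsub>M\<^esub> x \<notin> K (Suc i)"
      unfolding Supp_quot_def by simp_all
    then obtain x where x: "x \<in> K i" and H: "\<forall>s\<in>carrier R - p. s \<odot>\<^bsub>M\<^esub> x \<notin> K (Suc i)"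
      by blast
    interpret P: primeideal p R by fact
    note S = sub_facts[OF M Ksub[of i]]
    note S1 = sub_facts[OF M Ksub[of "Suc i"]]
    have xc: "x \<in> carrier M" using x S(1) by blast
    show "p \<in> MaxSpec R"
    proof (rule ccontr)
      assume nm: "p \<notin> MaxSpec R"
      have "Supp_quot R M'' (B i) (B (Suc i)) \<subseteq> MaxSpec R" using n2 i by simp
      then have "p \<notin> Supp_quot R M'' (B i) (B (Suc i))" using nm by blast
      then have nB: "\<not> (\<exists>y\<in>B i. \<forall>s\<in>carrier R - p. s \<odot>\<^bsub>M''\<^esub> y \<notin> B (Suc i))"
        using p unfolding Supp_quot_def by simp
      have "g x \<in> B i" using x unfolding B_def by (rule imageI)
      with nB have "\<exists>s\<in>carrier R - p. s \<odot>\<^bsub>M''\<^esub> g x \<in> B (Suc i)" by blast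
      then obtain s where s: "s \<in> carrier R - p" and sB: "s \<odot>\<^bsub>M''\<^esub> g x \<in> B (Suc i)"
        by blast
      from sB obtain w where w: "w \<in> K (Suc i)" and gw': "s \<odot>\<^bsub>M''\<^esub> g x = g w"
        unfolding B_def by (rule imageE)
      note gw = gw'[symmetric]
      have wc: "w \<in> carrier M" using w S1(1) by blast
      have sc: "s \<in> carrier R" using s by blast
      have sxc: "s \<odot>\<^bsub>M\<^esub> x \<in> carrier M" using sc xc by simp
      define d where "d = s \<odot>\<^bsub>M\<^esub> x \<oplus>\<^bsub>M\<^esub> \<ominus>\<^bsub>M\<^esub> w"
      have dc: "d \<in> carrier M" unfolding d_def using sxc wc by simp
      have "g d = g (s \<odot>\<^bsub>M\<^esub> x) \<oplus>\<^bsub>M''\<^esub> \<ominus>\<^bsub>M''\<^esub> g w"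
        unfolding d_def using G(4)[of "s \<odot>\<^bsub>M\<^esub> x" "\<ominus>\<^bsub>M\<^esub> w"] G(2)[OF wc] sxc wc by simp
      also have "\<dots> = s \<odot>\<^bsub>M''\<^esub> g x \<oplus>\<^bsub>M''\<^esub> \<ominus>\<^bsub>M''\<^esub> (s \<odot>\<^bsub>M''\<^esub> g x)"
        unfolding gw G(5)[OF sc xc] ..
      also have "\<dots> = \<zero>\<^bsub>M''\<^esub>"
        by (rule MM''.r_neg) (use G(3)[OF xc] sc in simp)
      finally have "d \<in> {x \<in> carrier M. g x = \<zero>\<^bsub>M''\<^esub>}" using dc by simp
      then have "d \<in> f ` carrier M'" unfolding ex .
      then obtain z where zc: "z \<in> carrier M'" and fz': "d = f z" by (rule imageE)
      note fz = fz'[symmetric]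
      have "w \<in> K i" using w Kdec by blast
      then have "\<ominus>\<^bsub>M\<^esub> w \<in> K i" by (rule S(5))
      moreover have "s \<odot>\<^bsub>M\<^esub> x \<in> K i" using sc x by (rule S(4))
      ultimately have "d \<in> K i" unfolding d_def using S(3) by blast
      then have "z \<in> A i" using zc fz unfolding A_def by simp
      moreover have "Supp_quot R M' (A i) (A (Suc i)) \<subseteq> MaxSpec R" using n1 i by simp
      then have "p \<notin> Supp_quot R M' (A i) (A (Suc i))" using nm by blast
      then have nA: "\<not> (\<exists>y\<in>A i. \<forall>s\<in>carrier R - p. s \<odot>\<^bsub>M'\<^esub> y \<notin> A (Suc i))"
        using p unfolding Supp_quot_def by simp
      ultimately have "\<exists>t\<in>carrier R - p. t \<odot>\<^bsub>M'\<^esub> z \<in> A (Suc i)" by blast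
      then obtain t where t: "t \<in> carrier R - p" and "t \<odot>\<^bsub>M'\<^esub> z \<in> A (Suc i)"
        by blast
      then have "f (t \<odot>\<^bsub>M'\<^esub> z) \<in> K (Suc i)" unfolding A_def by simp
      then have td: "t \<odot>\<^bsub>M\<^esub> d \<in> K (Suc i)" using F(5)[of t z] t zc fz by simp
      have tc: "t \<in> carrier R" using t by blast
      have "t \<odot>\<^bsub>M\<^esub> d = (t \<otimes>\<^bsub>R\<^esub> s) \<odot>\<^bsub>M\<^esub> x \<oplus>\<^bsub>M\<^esub> \<ominus>\<^bsub>M\<^esub> (t \<odot>\<^bsub>M\<^esub> w)"
        unfolding d_def using tc sc xc wc sxc
        by (simp add: MM.smult_r_distr MM.smult_r_minus MM.smult_assoc1)
      then have eq: "(t \<otimes>\<^bsub>R\<^esub> s) \<odot>\<^bsub>M\<^esub> x = t \<odot>\<^bsub>M\<^esub> d \<oplus>\<^bsub>M\<^esub> t \<odot>\<^bsub>M\<^esub> w"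
        using tc sc xc wc dc by (simp add: MM.add.inv_solve_right)
      have "(t \<otimes>\<^bsub>R\<^esub> s) \<odot>\<^bsub>M\<^esub> x \<in> K (Suc i)" unfolding eq using td S1(3,4) w tc by blast
      moreover have "t \<otimes>\<^bsub>R\<^esub> s \<in> carrier R - p" using t s P.I_prime[of t s] by auto
      ultimately show False using H by blast
    qed
  qed
  then show "\<exists>n. \<forall>i\<ge>n. Supp_quot R M (K i) (K (Suc i)) \<subseteq> MaxSpec R" by blast
qed

theorem proposition2p6:
  fixes R :: "('r, 'x) ring_scheme"
  assumes "cring R" and "noetherian_ring R"
  shows
    \<comment> \<open>closed under submodules\<close>
    "(\<forall>(M :: ('r, 'a) module) N.
        module R M \<and> submodule N R M \<and> in_Z R M \<longrightarrow> in_Z R (M\<lparr>carrier := N\<rparr>))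
     \<and>
     \<comment> \<open>closed under quotient modules (surjective R-linear images)\<close>
     (\<forall>(M :: ('r, 'a) module) (M'' :: ('r, 'c) module) g.
        module R M \<and> module R M'' \<and> g \<in> module_hom R M M'' \<and>
        g ` carrier M = carrier M'' \<and> in_Z R M \<longrightarrow> in_Z R M'')
     \<and>
     \<comment> \<open>closed under extensions: 0 \<rightarrow> M' \<rightarrow> M \<rightarrow> M'' \<rightarrow> 0 exact\<close>
     (\<forall>(M' :: ('r, 'b) module) (M :: ('r, 'a) module) (M'' :: ('r, 'c) module) f g.
        module R M' \<and> module R M \<and> module R M'' \<and>
        f \<in> module_hom R M' M \<and> g \<in> module_hom R M M'' \<and>
        inj_on f (carrier M') \<and> g ` carrier M = carrier M'' \<and>
        {x \<in> carrier M. g x = \<zero>\<^bsub>M''\<^esub>} = f ` carrier M' \<and>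
        in_Z R M' \<and> in_Z R M'' \<longrightarrow> in_Z R M)"
  apply (intro conjI allI impI)
  subgoal by (elim conjE, rule part1)
  subgoal by (elim conjE, rule part2)
  subgoal by (elim conjE, rule part3)
  done

end
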